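(* For every integer $k\ge1$ and variables $x_1,\dots,x_k$, from the axioms $\{0\le x_i\le1\}_{i\in[k]}$ there is a degree-$2k$ sum-of-squares derivation of $$\prod_{i=1}^kx_i-\Big(\prod_{i=1}^kx_i\Big)^2\le\sum_{i=1}^k(x_i-x_i^2).$$
   Context: A degree-$d$ sum-of-squares derivation of $p\le q$ from axioms $\{g_j\ge0\}$ means $q-p=s+\sum_t r_tG_t$ with $s,r_t$ sums of squares, each $G_t$ a product of axiom polynomials $g_j$, and all terms of degree at most $d$. *)

theory Defs
  imports Complex_Main "HOL-Library.Poly_Mapping"
begin

text \<open>Multivariate real polynomials in variables x_0, x_1, ...:
  a monomial is a finitely supported exponent vector (nat \<Rightarrow>0 nat),
  a polynomial is a finitely supported map from monomials to real coefficients.\<close>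

type_synonym mpoly = "(nat \<Rightarrow>\<^sub>0 nat) \<Rightarrow>\<^sub>0 real"

definition Var :: "nat \<Rightarrow> mpoly" where
  "Var i = Poly_Mapping.single (Poly_Mapping.single i 1) 1"

definition mdeg :: "(nat \<Rightarrow>\<^sub>0 nat) \<Rightarrow> nat" where
  "mdeg m = sum (Poly_Mapping.lookup m) (Poly_Mapping.keys m)"

text \<open>Total degree (the zero polynomial gets degree 0).\<close>
definition tdeg :: "mpoly \<Rightarrow> nat" where
  "tdeg p = Max (insert 0 (mdeg ` Poly_Mapping.keys p))"

text \<open>Degree-d sum-of-squares derivation of  p \<le> q  from axioms g_j \<ge> 0 (the list axs):
  q - p = s + \<Sum>_t r_t G_t, s and r_t sums of squares, G_t products of axioms
  (given by a list of axiom indices, repetitions allowed), every term of degree \<le> d.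
  Each r_t G_t is split into its individual square summands q^2 G_t; the degree
  bound is imposed on each such summand (and on each square of s).\<close>
definition sos_derivation :: "mpoly list \<Rightarrow> nat \<Rightarrow> mpoly \<Rightarrow> mpoly \<Rightarrow> bool" where
  "sos_derivation axs d p q \<longleftrightarrow>
     (\<exists>(ss :: mpoly list) (rs :: (mpoly \<times> nat list) list).
        q - p = sum_list (map (\<lambda>s. s * s) ss)
              + sum_list (map (\<lambda>(r, js). r * r * prod_list (map (\<lambda>j. axs ! j) js)) rs)
      \<and> (\<forall>s\<in>set ss. tdeg (s * s) \<le> d)
      \<and> (\<forall>(r, js)\<in>set rs. (\<forall>j\<in>set js. j < length axs)
             \<and> tdeg (r * r * prod_list (map (\<lambda>j. axs ! j) js)) \<le> d))"

text \<open>Axioms 0 \<le> x_i and x_i \<le> 1 (i.e. 1 - x_i \<ge> 0) for i < k (variables indexed from 0).\<close>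
definition box_axioms :: "nat \<Rightarrow> mpoly list" where
  "box_axioms k = concat (map (\<lambda>i. [Var i, 1 - Var i]) [0..<k])"

end

theory Submission
  imports Defs
begin

lemma mdeg_superset:
  assumes "finite S" "Poly_Mapping.keys m \<subseteq> S"
  shows "mdeg m = sum (Poly_Mapping.lookup m) S"
  unfolding mdeg_def
  by (rule sum.mono_neutral_left) (use assms in \<open>auto simp: in_keys_iff\<close>)

lemma mdeg_add: "mdeg (a + b) = mdeg a + mdeg b"
proof -
  let ?S = "Poly_Mapping.keys a \<union> Poly_Mapping.keys b \<union> Poly_Mapping.keys (a + b)"
  have "mdeg (a + b) = sum (Poly_Mapping.lookup (a+b)) ?S" by (rule mdeg_superset) auto
  also have "\<dots> = sum (Poly_Mapping.lookup a) ?S + sum (Poly_Mapping.lookup b) ?S"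
    by (simp add: lookup_add sum.distrib)
  also have "\<dots> = mdeg a + mdeg b"
  proof -
    have "mdeg a = sum (Poly_Mapping.lookup a) ?S" by (rule mdeg_superset) auto
    moreover have "mdeg b = sum (Poly_Mapping.lookup b) ?S" by (rule mdeg_superset) auto
    ultimately show ?thesis by simp
  qed
  finally show ?thesis .
qed

lemma tdeg_le_iff: "tdeg p \<le> d \<longleftrightarrow> (\<forall>m\<in>Poly_Mapping.keys p. mdeg m \<le> d)"
  unfolding tdeg_def by simp

lemma tdeg_mult: "tdeg (p * q) \<le> tdeg p + tdeg q"
proof -
  have "\<forall>m\<in>Poly_Mapping.keys (p*q). mdeg m \<le> tdeg p + tdeg q"
  proof
    fix m assume "m \<in> Poly_Mapping.keys (p*q)"
    then obtain a b where ab: "m = a + b" "a \<in> Poly_Mapping.keys p" "b \<in> Poly_Mapping.keys q"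
      using keys_mult by blast
    have "mdeg a \<le> tdeg p" "mdeg b \<le> tdeg q" using ab tdeg_le_iff by blast+
    then show "mdeg m \<le> tdeg p + tdeg q" using ab by (simp add: mdeg_add)
  qed
  then show ?thesis using tdeg_le_iff by blast
qed

lemma tdeg_diff: "tdeg (p - q) \<le> max (tdeg p) (tdeg q)"
  using keys_diff[of p q] tdeg_le_iff[of p] tdeg_le_iff[of q] tdeg_le_iff[of "p - q"]
  by (metis (no_types, lifting) Un_iff max.cobounded1 max.cobounded2 order_trans subsetD order_refl)

lemma tdeg_one: "tdeg 1 = 0"
  unfolding tdeg_def by (simp add: mdeg_def)

lemma tdeg_Var: "tdeg (Var i) \<le> 1"
  unfolding tdeg_le_iff Var_def by (simp add: mdeg_def)

lemma tdeg_1Var: "tdeg (1 - Var i) \<le> 1"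
  using tdeg_diff[of 1 "Var i"] tdeg_one tdeg_Var[of i] by simp

lemma box_len: "length (box_axioms K) = 2 * K"
  unfolding box_axioms_def by (induct K) auto

lemma box_nth: "i < K \<Longrightarrow> box_axioms K ! (2*i) = Var i \<and> box_axioms K ! (2*i+1) = 1 - Var i"
proof (induct K)
  case 0 then show ?case by simp
next
  case (Suc K)
  have eq: "box_axioms (Suc K) = box_axioms K @ [Var K, 1 - Var K]"
    unfolding box_axioms_def by simp
  show ?case
  proof (cases "i < K")
    case True
    then show ?thesis using Suc by (simp add: eq nth_append box_len)
  next
    case False
    then have "i = K" using Suc by simp
    then show ?thesis by (simp add: eq nth_append box_len)
  qed
qed

lemma box_nth1: "i < K \<Longrightarrow> box_axioms K ! (2*i) = Var i"
  using box_nth by blast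
lemma box_nth1': "i < K \<Longrightarrow> box_axioms K ! (i*2) = Var i"
  using box_nth by (metis mult.commute)
lemma box_nth2: "i < K \<Longrightarrow> box_axioms K ! Suc (2*i) = 1 - Var i"
  using box_nth by simp

lemma box_tdeg: "j < length (box_axioms K) \<Longrightarrow> tdeg (box_axioms K ! j) \<le> 1"
proof -
  assume j: "j < length (box_axioms K)"
  obtain i where "j = 2*i \<or> j = 2*i+1" by (metis dvd_mult_div_cancel odd_two_times_div_two_succ)
  moreover have "i < K" using j calculation by (auto simp: box_len)
  ultimately show ?thesis using box_nth[of i K] tdeg_Var tdeg_1Var by auto
qed

lemma tdeg_prod_list:
  "(\<forall>j\<in>set js. j < length (box_axioms K)) \<Longrightarrow>
   tdeg (prod_list (map (\<lambda>j. box_axioms K ! j) js)) \<le> length js"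
proof (induct js)
  case Nil then show ?case by (simp add: tdeg_one)
next
  case (Cons j js)
  then show ?case
    using tdeg_mult[of "box_axioms K ! j" "prod_list (map (\<lambda>j. box_axioms K ! j) js)"]
      box_tdeg[of j K] by simp
qed

definition deriv :: "mpoly list \<Rightarrow> nat \<Rightarrow> mpoly \<Rightarrow> bool" where
  "deriv axs d e \<longleftrightarrow>
     (\<exists>(ss :: mpoly list) (rs :: (mpoly \<times> nat list) list).
        e = sum_list (map (\<lambda>s. s * s) ss)
              + sum_list (map (\<lambda>(r, js). r * r * prod_list (map (\<lambda>j. axs ! j) js)) rs)
      \<and> (\<forall>s\<in>set ss. tdeg (s * s) \<le> d)
      \<and> (\<forall>(r, js)\<in>set rs. (\<forall>j\<in>set js. j < length axs)
             \<and> tdeg (r * r * prod_list (map (\<lambda>j. axs ! j) js)) \<le> d))"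

lemma deriv_zero: "deriv axs d 0"
  unfolding deriv_def by (rule exI[of _ "[]"], rule exI[of _ "[]"]) simp

lemma deriv_add: "deriv axs d a \<Longrightarrow> deriv axs d b \<Longrightarrow> deriv axs d (a + b)"
proof -
  assume "deriv axs d a" "deriv axs d b"
  then obtain ss1 rs1 ss2 rs2 where
    h1: "a = sum_list (map (\<lambda>s. s * s) ss1)
              + sum_list (map (\<lambda>(r, js). r * r * prod_list (map (\<lambda>j. axs ! j) js)) rs1)"
      "(\<forall>s\<in>set ss1. tdeg (s * s) \<le> d)"
      "(\<forall>(r, js)\<in>set rs1. (\<forall>j\<in>set js. j < length axs)
             \<and> tdeg (r * r * prod_list (map (\<lambda>j. axs ! j) js)) \<le> d)"
   and h2: "b = sum_list (map (\<lambda>s. s * s) ss2)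
              + sum_list (map (\<lambda>(r, js). r * r * prod_list (map (\<lambda>j. axs ! j) js)) rs2)"
      "(\<forall>s\<in>set ss2. tdeg (s * s) \<le> d)"
      "(\<forall>(r, js)\<in>set rs2. (\<forall>j\<in>set js. j < length axs)
             \<and> tdeg (r * r * prod_list (map (\<lambda>j. axs ! j) js)) \<le> d)"
    unfolding deriv_def by blast
  show ?thesis unfolding deriv_def
    by (rule exI[of _ "ss1 @ ss2"], rule exI[of _ "rs1 @ rs2"]) (use h1 h2 in \<open>auto simp: algebra_simps\<close>)
qed

lemma deriv_sum: "finite A \<Longrightarrow> (\<And>x. x \<in> A \<Longrightarrow> deriv axs d (f x)) \<Longrightarrow> deriv axs d (sum f A)"
  by (induct A rule: finite_induct) (auto intro: deriv_add deriv_zero)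

lemma deriv_single:
  assumes "\<forall>j\<in>set js. j < length axs" "tdeg (prod_list (map (\<lambda>j. axs ! j) js)) \<le> d"
  shows "deriv axs d (prod_list (map (\<lambda>j. axs ! j) js))"
  unfolding deriv_def
  by (rule exI[of _ "[]"], rule exI[of _ "[(1::mpoly, js)]"]) (use assms in simp)

lemma deriv_box:
  assumes "\<forall>j\<in>set js. j < 2 * K" "length js \<le> d"
  shows "deriv (box_axioms K) d (prod_list (map (\<lambda>j. box_axioms K ! j) js))"
  using assms tdeg_prod_list[of js K] by (intro deriv_single) (auto simp: box_len)


definition PP :: "nat \<Rightarrow> mpoly" where "PP n = (\<Prod>i<n. Var i)"
definition DD :: "nat \<Rightarrow> mpoly" where
  "DD n = (\<Sum>i<n. Var i - (Var i)^2) - (PP n - (PP n)^2)"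

lemma tele: "1 - PP n = (\<Sum>j<n. PP j * (1 - Var j))"
  by (induct n) (auto simp: PP_def algebra_simps)

lemma ring_step: "(b - b^2) - (a*b - (a*b)^2) + (a - a^2) = (1 - a)*(1 - b)*(a + b + a*b)"
  for a b :: "'a::comm_ring_1"
  by (simp add: algebra_simps power2_eq_square)

lemma DD_step: "DD (Suc n) = DD n + (\<Sum>j<n.
     PP j * (1 - Var j) * (1 - Var n) * PP n
   + PP j * (1 - Var j) * (1 - Var n) * Var n
   + PP j * (1 - Var j) * (1 - Var n) * (PP n * Var n))"
proof -
  have "DD (Suc n) = DD n + ((Var n - (Var n)^2) - (PP n * Var n - (PP n * Var n)^2) + (PP n - (PP n)^2))"
    by (simp add: DD_def PP_def algebra_simps)
  also have "\<dots> = DD n + (1 - PP n) * ((1 - Var n) * (PP n + Var n + PP n * Var n))"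
    by (simp only: ring_step mult.assoc)
  also have "\<dots> = DD n + (\<Sum>j<n. PP j * (1 - Var j) * ((1 - Var n) * (PP n + Var n + PP n * Var n)))"
    by (simp only: tele sum_distrib_right)
  finally show ?thesis by (simp add: algebra_simps)
qed

definition evens :: "nat \<Rightarrow> nat list" where "evens j = map (\<lambda>i. 2*i) [0..<j]"

lemma evens_prod: "j \<le> K \<Longrightarrow> prod_list (map (\<lambda>x. box_axioms K ! x) (evens j)) = PP j"
  by (induct j) (auto simp: evens_def PP_def box_nth1' mult.commute)

lemma evens_set: "x \<in> set (evens j) \<Longrightarrow> j \<le> K \<Longrightarrow> x < 2 * K"
  by (auto simp: evens_def)

lemma main:
  "n \<le> K \<Longrightarrow> deriv (box_axioms K) (2*K) (DD n)"
proof (induct n)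
  case 0
  have "DD 0 = 0" by (simp add: DD_def PP_def)
  then show ?case by (simp add: deriv_zero)
next
  case (Suc n)
  let ?A = "box_axioms K"
  let ?pl = "\<lambda>js. prod_list (map (\<lambda>x. ?A ! x) js)"
  have nK: "n < K" using Suc by simp
  have t: "deriv ?A (2*K) (PP j * (1 - Var j) * (1 - Var n) * PP n
   + PP j * (1 - Var j) * (1 - Var n) * Var n
   + PP j * (1 - Var j) * (1 - Var n) * (PP n * Var n))" if j: "j < n" for j
  proof -
    have e1: "?pl (evens j @ [2*j+1, 2*n+1] @ evens n) = PP j * (1 - Var j) * (1 - Var n) * PP n"
      using j nK by (simp add: evens_prod box_nth1 box_nth2 mult.assoc)
    have e2: "?pl (evens j @ [2*j+1, 2*n+1, 2*n]) = PP j * (1 - Var j) * (1 - Var n) * Var n"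
      using j nK by (simp add: evens_prod box_nth1 box_nth2 mult.assoc)
    have e3: "?pl (evens j @ [2*j+1, 2*n+1] @ evens n @ [2*n]) = PP j * (1 - Var j) * (1 - Var n) * (PP n * Var n)"
      using j nK by (simp add: evens_prod box_nth1 box_nth2 mult.assoc)
    have s1: "\<forall>x\<in>set (evens j). x < 2*K" "\<forall>x\<in>set (evens n). x < 2*K"
      using j nK evens_set[of _ j K] evens_set[of _ n K] by auto
    have d1: "deriv ?A (2*K) (?pl (evens j @ [2*j+1, 2*n+1] @ evens n))"
      by (rule deriv_box) (use s1 j nK in \<open>auto simp: evens_def\<close>)
    have d2: "deriv ?A (2*K) (?pl (evens j @ [2*j+1, 2*n+1, 2*n]))"
      by (rule deriv_box) (use s1 j nK in \<open>auto simp: evens_def\<close>)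
    have d3: "deriv ?A (2*K) (?pl (evens j @ [2*j+1, 2*n+1] @ evens n @ [2*n]))"
      by (rule deriv_box) (use s1 j nK in \<open>auto simp: evens_def\<close>)
    show ?thesis using deriv_add[OF deriv_add[OF d1 d2] d3] by (simp only: e1 e2 e3)
  qed
  have "deriv ?A (2*K) (DD n)" using Suc by simp
  then show ?case unfolding DD_step
    using t by (intro deriv_add[OF \<open>deriv ?A (2*K) (DD n)\<close>] deriv_sum) auto
qed

theorem claimB2:
  fixes k :: nat
  assumes "k \<ge> 1"
  shows "sos_derivation (box_axioms k) (2 * k)
           ((\<Prod>i<k. Var i) - (\<Prod>i<k. Var i)^2)
           (\<Sum>i<k. Var i - (Var i)^2)"
proof -
  have "deriv (box_axioms k) (2*k) (DD k)" by (rule main) simp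
  then show ?thesis unfolding sos_derivation_def deriv_def DD_def PP_def .
qed

end
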